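(* Let $T$ be an $\mathcal O$-operator on a Lie algebra $\mathfrak g$ with respect to a representation $(V;\rho)$, and let $T^1_t=T+t\mathfrak T_1$ and $T^2_t=T+t\mathfrak T_2$ be one-parameter infinitesimal deformations of $T$. If $T^1_t$ and $T^2_t$ are equivalent, then $\mathfrak T_1$ and $\mathfrak T_2$ lie in the same cohomology class of $\mathcal H^1(V,\mathfrak g)$.
   Context: An $\mathcal O$-operator: linear $T:V\to\mathfrak g$ with $[Tu,Tv]=T(\rho(Tu)(v)-\rho(Tv)(u))$. A one-parameter infinitesimal deformation of $T$ is $T+t\mathfrak T$ with $\mathfrak T:V\to\mathfrak g$ linear such that $T+t\mathfrak T$ is an $\mathcal O$-operator for all scalars $t$ (then $\mathfrak T$ is a $1$-cocycle below). A homomorphism from an $\mathcal O$-operator $T'$ to $T$ is a pair of a Lie algebra homomorphism $\phi_{\mathfrak g}:\mathfrak g\to\mathfrak g$ and a linear $\phi_V:V\to V$ with $T\circ\phi_V=\phi_{\mathfrak g}\circ T'$ and $\phi_V\rho(x)(u)=\rho(\phi_{\mathfrak g}(x))(\phi_V(u))$. The deformations $T^1_t,T^2_t$ are equivalent if there is $x\in\mathfrak g$ such that $(\mathrm{Id}_{\mathfrak g}+t\,\mathrm{ad}_x,\mathrm{Id}_V+t\rho(x))$ is a homomorphism from $T^2_t$ to $T^1_t$. Cohomology: $[u,v]_T=\rho(Tu)(v)-\rho(Tv)(u)$ is a Lie bracket on $V$, $\bar\rho(u)(x)=[Tu,x]+T\rho(x)(u)$ is a representation of $(V,[\cdot,\cdot]_T)$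 on $\mathfrak g$, and $\mathcal H^k(V,\mathfrak g)$ is the Chevalley–Eilenberg cohomology of $(V,[\cdot,\cdot]_T)$ with coefficients in $(\mathfrak g,\bar\rho)$, with coboundary $d_{\bar\rho}f(u_1,\dots,u_{k+1})=\sum_{i}(-1)^{i+1}[Tu_i,f(\dots,\hat u_i,\dots)]+\sum_i(-1)^{i+1}T\rho(f(\dots,\hat u_i,\dots))(u_i)+\sum_{i<j}(-1)^{i+j}f([u_i,u_j]_T,u_1,\dots,\hat u_i,\dots,\hat u_j,\dots,u_{k+1})$ on $\mathrm{Hom}(\wedge^kV,\mathfrak g)$. *)

theory Defs
  imports Complex_Main
begin

text \<open>Vector spaces over a field 'k are given by a scalar multiplication on an
  abelian group type; linear maps are Vector_Spaces.linear.\<close>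

definition lie_algebra :: "('k::field \<Rightarrow> 'g::ab_group_add \<Rightarrow> 'g) \<Rightarrow> ('g \<Rightarrow> 'g \<Rightarrow> 'g) \<Rightarrow> bool" where
  "lie_algebra sg br \<longleftrightarrow>
     vector_space sg \<and>
     (\<forall>x. Vector_Spaces.linear sg sg (br x)) \<and> (\<forall>y. Vector_Spaces.linear sg sg (\<lambda>x. br x y)) \<and>
     (\<forall>x. br x x = 0) \<and>
     (\<forall>x y z. br x (br y z) + br y (br z x) + br z (br x y) = 0)"

definition lie_rep ::
  "('k::field \<Rightarrow> 'g::ab_group_add \<Rightarrow> 'g) \<Rightarrow> ('g \<Rightarrow> 'g \<Rightarrow> 'g) \<Rightarrow>
   ('k \<Rightarrow> 'v::ab_group_add \<Rightarrow> 'v) \<Rightarrow> ('g \<Rightarrow> 'v \<Rightarrow> 'v) \<Rightarrow> bool" where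
  "lie_rep sg br sv rho \<longleftrightarrow>
     lie_algebra sg br \<and> vector_space sv \<and>
     (\<forall>x. Vector_Spaces.linear sv sv (rho x)) \<and> (\<forall>u. Vector_Spaces.linear sg sv (\<lambda>x. rho x u)) \<and>
     (\<forall>x y u. rho (br x y) u = rho x (rho y u) - rho y (rho x u))"

definition O_operator ::
  "('k::field \<Rightarrow> 'g::ab_group_add \<Rightarrow> 'g) \<Rightarrow> ('g \<Rightarrow> 'g \<Rightarrow> 'g) \<Rightarrow>
   ('k \<Rightarrow> 'v::ab_group_add \<Rightarrow> 'v) \<Rightarrow> ('g \<Rightarrow> 'v \<Rightarrow> 'v) \<Rightarrow> ('v \<Rightarrow> 'g) \<Rightarrow> bool" where
  "O_operator sg br sv rho T \<longleftrightarrow>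
     Vector_Spaces.linear sv sg T \<and>
     (\<forall>u v. br (T u) (T v) = T (rho (T u) v - rho (T v) u))"

definition deform :: "('k \<Rightarrow> 'g \<Rightarrow> 'g) \<Rightarrow> ('v \<Rightarrow> 'g::ab_group_add) \<Rightarrow> ('v \<Rightarrow> 'g) \<Rightarrow> 'k \<Rightarrow> 'v \<Rightarrow> 'g" where
  "deform sg T TT t = (\<lambda>u. T u + sg t (TT u))"

definition inf_deformation ::
  "('k::field \<Rightarrow> 'g::ab_group_add \<Rightarrow> 'g) \<Rightarrow> ('g \<Rightarrow> 'g \<Rightarrow> 'g) \<Rightarrow>
   ('k \<Rightarrow> 'v::ab_group_add \<Rightarrow> 'v) \<Rightarrow> ('g \<Rightarrow> 'v \<Rightarrow> 'v) \<Rightarrow> ('v \<Rightarrow> 'g) \<Rightarrow> ('v \<Rightarrow> 'g) \<Rightarrow> bool" where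
  "inf_deformation sg br sv rho T TT \<longleftrightarrow>
     Vector_Spaces.linear sv sg TT \<and> (\<forall>t. O_operator sg br sv rho (deform sg T TT t))"

definition lie_hom ::
  "('k::field \<Rightarrow> 'g::ab_group_add \<Rightarrow> 'g) \<Rightarrow> ('g \<Rightarrow> 'g \<Rightarrow> 'g) \<Rightarrow> ('g \<Rightarrow> 'g) \<Rightarrow> bool" where
  "lie_hom sg br phi \<longleftrightarrow> Vector_Spaces.linear sg sg phi \<and> (\<forall>x y. phi (br x y) = br (phi x) (phi y))"

definition O_hom ::
  "('k::field \<Rightarrow> 'g::ab_group_add \<Rightarrow> 'g) \<Rightarrow> ('g \<Rightarrow> 'g \<Rightarrow> 'g) \<Rightarrow>
   ('k \<Rightarrow> 'v::ab_group_add \<Rightarrow> 'v) \<Rightarrow> ('g \<Rightarrow> 'v \<Rightarrow> 'v) \<Rightarrow>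
   ('v \<Rightarrow> 'g) \<Rightarrow> ('v \<Rightarrow> 'g) \<Rightarrow> ('g \<Rightarrow> 'g) \<Rightarrow> ('v \<Rightarrow> 'v) \<Rightarrow> bool" where
  "O_hom sg br sv rho T' T phig phiV \<longleftrightarrow>
     lie_hom sg br phig \<and> Vector_Spaces.linear sv sv phiV \<and>
     (\<forall>u. T (phiV u) = phig (T' u)) \<and>
     (\<forall>x u. phiV (rho x u) = rho (phig x) (phiV u))"

definition equiv_deformations ::
  "('k::field \<Rightarrow> 'g::ab_group_add \<Rightarrow> 'g) \<Rightarrow> ('g \<Rightarrow> 'g \<Rightarrow> 'g) \<Rightarrow>
   ('k \<Rightarrow> 'v::ab_group_add \<Rightarrow> 'v) \<Rightarrow> ('g \<Rightarrow> 'v \<Rightarrow> 'v) \<Rightarrow>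
   ('k \<Rightarrow> 'v \<Rightarrow> 'g) \<Rightarrow> ('k \<Rightarrow> 'v \<Rightarrow> 'g) \<Rightarrow> bool" where
  "equiv_deformations sg br sv rho T1t T2t \<longleftrightarrow>
     (\<exists>x. \<forall>t. O_hom sg br sv rho (T2t t) (T1t t)
                 (\<lambda>y. y + sg t (br x y)) (\<lambda>u. u + sv t (rho x u)))"

text \<open>Cohomology of (V,[.,.]_T) with coefficients in (g, bar rho), low degrees.\<close>
definition bracketT :: "('g \<Rightarrow> 'v \<Rightarrow> 'v::ab_group_add) \<Rightarrow> ('v \<Rightarrow> 'g) \<Rightarrow> 'v \<Rightarrow> 'v \<Rightarrow> 'v" where
  "bracketT rho T u v = rho (T u) v - rho (T v) u"

definition d0 :: "('g \<Rightarrow> 'g \<Rightarrow> 'g) \<Rightarrow> ('g \<Rightarrow> 'v \<Rightarrow> 'v) \<Rightarrow> ('v \<Rightarrow> 'g) \<Rightarrow> 'g \<Rightarrow> 'v \<Rightarrow> 'g::ab_group_add" where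
  "d0 br rho T x = (\<lambda>u. br (T u) x + T (rho x u))"

definition d1 :: "('g \<Rightarrow> 'g \<Rightarrow> 'g) \<Rightarrow> ('g \<Rightarrow> 'v \<Rightarrow> 'v::ab_group_add) \<Rightarrow> ('v \<Rightarrow> 'g) \<Rightarrow> ('v \<Rightarrow> 'g) \<Rightarrow> 'v \<Rightarrow> 'v \<Rightarrow> 'g::ab_group_add" where
  "d1 br rho T f = (\<lambda>u1 u2.
      br (T u1) (f u2) - br (T u2) (f u1)
      + T (rho (f u2) u1) - T (rho (f u1) u2)
      - f (bracketT rho T u1 u2))"

definition cocycle1 ::
  "('k::field \<Rightarrow> 'g::ab_group_add \<Rightarrow> 'g) \<Rightarrow> ('g \<Rightarrow> 'g \<Rightarrow> 'g) \<Rightarrow>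
   ('k \<Rightarrow> 'v::ab_group_add \<Rightarrow> 'v) \<Rightarrow> ('g \<Rightarrow> 'v \<Rightarrow> 'v) \<Rightarrow> ('v \<Rightarrow> 'g) \<Rightarrow> ('v \<Rightarrow> 'g) \<Rightarrow> bool" where
  "cocycle1 sg br sv rho T f \<longleftrightarrow> Vector_Spaces.linear sv sg f \<and> (\<forall>u1 u2. d1 br rho T f u1 u2 = 0)"

definition same_class_H1 ::
  "('k::field \<Rightarrow> 'g::ab_group_add \<Rightarrow> 'g) \<Rightarrow> ('g \<Rightarrow> 'g \<Rightarrow> 'g) \<Rightarrow>
   ('k \<Rightarrow> 'v::ab_group_add \<Rightarrow> 'v) \<Rightarrow> ('g \<Rightarrow> 'v \<Rightarrow> 'v) \<Rightarrow> ('v \<Rightarrow> 'g) \<Rightarrow> ('v \<Rightarrow> 'g) \<Rightarrow> ('v \<Rightarrow> 'g) \<Rightarrow> bool" where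
  "same_class_H1 sg br sv rho T f1 f2 \<longleftrightarrow>
     cocycle1 sg br sv rho T f1 \<and> cocycle1 sg br sv rho T f2 \<and>
     (\<exists>x. \<forall>u. f1 u - f2 u = d0 br rho T x u)"

end

theory Submission
  imports Defs
begin

lemma lin_add: "Vector_Spaces.linear s1 s2 f \<Longrightarrow> f (a + b) = f a + f b"
  by (simp add: Vector_Spaces.linear_iff)
lemma lin_scale: "Vector_Spaces.linear s1 s2 f \<Longrightarrow> f (s1 r a) = s2 r (f a)"
  by (simp add: Vector_Spaces.linear_iff)
lemma lin_diff: "Vector_Spaces.linear s1 s2 f \<Longrightarrow> f (a - b) = f a - f b"
  using linear_iff_module_hom module_hom.diff by metis
lemma lin_neg: "Vector_Spaces.linear s1 s2 f \<Longrightarrow> f (- a) = - f a"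
  using linear_iff_module_hom module_hom.neg by metis

lemma extract_coeff:
  fixes sg :: "'k::field_char_0 \<Rightarrow> 'g::ab_group_add \<Rightarrow> 'g"
  assumes vs: "vector_space sg" and h: "\<And>t. A + sg t B + sg (t*t) C = 0"
  shows "B = 0"
proof -
  interpret G: vector_space sg by (rule vs)
  have "A = 0" using h[of 0] by simp
  then have 1: "B + C = 0" and 2: "- B + C = 0" using h[of 1] h[of "-1"] by simp_all
  have "B + B = (B + C) - (- B + C)" by (simp add: algebra_simps)
  then have "B + B = 0 - 0" by (simp only: 1 2)
  then have "B + B = 0" by simp
  then have "sg 2 B = 0" by (metis G.scale_left_distrib G.scale_one one_add_one)
  then have "sg (1/2) (sg 2 B) = 0" by simp
  then show "B = 0" by simp
qed

theorem theorem4p7: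
  fixes sg :: "'k::field_char_0 \<Rightarrow> 'g::ab_group_add \<Rightarrow> 'g"
    and sv :: "'k \<Rightarrow> 'v::ab_group_add \<Rightarrow> 'v"
    and br :: "'g \<Rightarrow> 'g \<Rightarrow> 'g"
    and rho :: "'g \<Rightarrow> 'v \<Rightarrow> 'v"
    and T TT1 TT2 :: "'v \<Rightarrow> 'g"
  assumes "lie_rep sg br sv rho"
    and "O_operator sg br sv rho T"
    and "inf_deformation sg br sv rho T TT1"
    and "inf_deformation sg br sv rho T TT2"
    and "equiv_deformations sg br sv rho (deform sg T TT1) (deform sg T TT2)"
  shows "same_class_H1 sg br sv rho T TT1 TT2"
proof -
  have LA: "lie_algebra sg br" and vsV: "vector_space sv"
    and rl: "\<And>x. Vector_Spaces.linear sv sv (rho x)" and rl2: "\<And>u. Vector_Spaces.linear sg sv (\<lambda>x. rho x u)"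
    using assms(1) unfolding lie_rep_def by auto
  have vsG: "vector_space sg" and bl: "\<And>x. Vector_Spaces.linear sg sg (br x)"
    and bl2: "\<And>y. Vector_Spaces.linear sg sg (\<lambda>x. br x y)" and bxx: "\<And>x. br x x = 0"
    using LA unfolding lie_algebra_def by auto
  interpret G: vector_space sg by (rule vsG)
  interpret V: vector_space sv by (rule vsV)
  have TL: "Vector_Spaces.linear sv sg T" using assms(2) unfolding O_operator_def by auto
  have brr: "\<And>x a b. br x (a + b) = br x a + br x b" "\<And>x r a. br x (sg r a) = sg r (br x a)"
    "\<And>x a b. br x (a - b) = br x a - br x b" "\<And>x a. br x (- a) = - br x a"
    using lin_add[OF bl] lin_scale[OF bl] lin_diff[OF bl] lin_neg[OF bl] by auto
  have brl: "\<And>x a b. br (a + b) x = br a x + br b x" "\<And>x r a. br (sg r a) x = sg r (br a x)"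
    "\<And>x a b. br (a - b) x = br a x - br b x" "\<And>x a. br (- a) x = - br a x"
    using lin_add[OF bl2] lin_scale[OF bl2] lin_diff[OF bl2] lin_neg[OF bl2] by auto
  have anti: "\<And>a b. br a b = - br b a"
  proof -
    fix a b
    have "br (a+b) (a+b) = br a b + br b a" by (simp only: brl brr) (simp add: bxx)
    then have "br a b + br b a = 0" using bxx[of "a+b"] by metis
    then show "br a b = - br b a" by (simp add: eq_neg_iff_add_eq_0)
  qed
  have rr: "\<And>x a b. rho x (a + b) = rho x a + rho x b" "\<And>x r a. rho x (sv r a) = sv r (rho x a)"
    "\<And>x a b. rho x (a - b) = rho x a - rho x b" "\<And>x a. rho x (- a) = - rho x a"
    using lin_add[OF rl] lin_scale[OF rl] lin_diff[OF rl] lin_neg[OF rl] by auto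
  have rl': "\<And>x a b. rho (a + b) x = rho a x + rho b x" "\<And>x r a. rho (sg r a) x = sv r (rho a x)"
    "\<And>x a b. rho (a - b) x = rho a x - rho b x" "\<And>x a. rho (- a) x = - rho a x"
    using lin_add[OF rl2] lin_scale[OF rl2] lin_diff[OF rl2] lin_neg[OF rl2] by auto
  have Tl: "\<And>a b. T (a + b) = T a + T b" "\<And>r a. T (sv r a) = sg r (T a)"
    "\<And>a b. T (a - b) = T a - T b" "\<And>a. T (- a) = - T a"
    using lin_add[OF TL] lin_scale[OF TL] lin_diff[OF TL] lin_neg[OF TL] by auto
  have TTO: "\<And>u v. br (T u) (T v) = T (rho (T u) v - rho (T v) u)"
    using assms(2) unfolding O_operator_def by auto
  have cocyc: "cocycle1 sg br sv rho T TT" if inf: "inf_deformation sg br sv rho T TT" for TT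
  proof -
    have TTL: "Vector_Spaces.linear sv sg TT" using inf unfolding inf_deformation_def by auto
    have TTl: "\<And>a b. TT (a + b) = TT a + TT b" "\<And>r a. TT (sv r a) = sg r (TT a)"
      "\<And>a b. TT (a - b) = TT a - TT b" "\<And>a. TT (- a) = - TT a"
      using lin_add[OF TTL] lin_scale[OF TTL] lin_diff[OF TTL] lin_neg[OF TTL] by auto
    have "d1 br rho T TT u v = 0" for u v
    proof -
      define a b c d where "a = T u" "b = TT u" "c = T v" "d = TT v"
      define w0 w1 where "w0 = rho a v - rho c u" "w1 = rho b v - rho d u"
      have "br a d + br b c - T w1 - TT w0 = 0"
      proof (rule extract_coeff[OF vsG])
        fix t
        have O: "br (a + sg t b) (c + sg t d) = (T (rho (a + sg t b) v - rho (c + sg t d) u)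
             + sg t (TT (rho (a + sg t b) v - rho (c + sg t d) u)))"
          using inf unfolding inf_deformation_def O_operator_def deform_def a_b_c_d_def by auto
        have e1: "br (a + sg t b) (c + sg t d) = br a c + sg t (br a d + br b c) + sg (t*t) (br b d)"
          by (simp add: brl brr G.scale_right_distrib algebra_simps)
        have e2: "rho (a + sg t b) v - rho (c + sg t d) u = w0 + sv t w1"
          by (simp add: rl' w0_w1_def V.scale_right_diff_distrib algebra_simps)
        have e3: "T (w0 + sv t w1) + sg t (TT (w0 + sv t w1)) = T w0 + sg t (T w1 + TT w0) + sg (t*t) (TT w1)"
          by (simp add: Tl TTl G.scale_right_distrib algebra_simps)
        have "(br a c - T w0) + sg t (br a d + br b c - T w1 - TT w0) + sg (t*t) (br b d - TT w1)
              = br (a + sg t b) (c + sg t d) - (T (rho (a + sg t b) v - rho (c + sg t d) u)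
             + sg t (TT (rho (a + sg t b) v - rho (c + sg t d) u)))"
          unfolding e1 e2 e3 by (simp add: G.scale_right_diff_distrib algebra_simps)
        then show "(br a c - T w0) + sg t (br a d + br b c - T w1 - TT w0) + sg (t*t) (br b d - TT w1) = 0"
          using O by simp
      qed
      then show ?thesis
        unfolding d1_def bracketT_def a_b_c_d_def w0_w1_def
        by (simp add: Tl anti[of "T v" "TT u"] algebra_simps)
    qed
    then show ?thesis using TTL unfolding cocycle1_def by auto
  qed
  obtain x where hx: "\<And>t. O_hom sg br sv rho (deform sg T TT2 t) (deform sg T TT1 t)
                 (\<lambda>y. y + sg t (br x y)) (\<lambda>u. u + sv t (rho x u))"
    using assms(5) unfolding equiv_deformations_def by auto
  have TT1L: "Vector_Spaces.linear sv sg TT1" using assms(3) unfolding inf_deformation_def by auto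
  have TT1l: "\<And>a b. TT1 (a + b) = TT1 a + TT1 b" "\<And>r a. TT1 (sv r a) = sg r (TT1 a)"
    using lin_add[OF TT1L] lin_scale[OF TT1L] by auto
  have "TT1 u - TT2 u = d0 br rho T (- x) u" for u
  proof -
    have "T (rho x u) + TT1 u - TT2 u - br x (T u) = 0"
    proof (rule extract_coeff[OF vsG])
      fix t
      have O: "deform sg T TT1 t (u + sv t (rho x u)) = deform sg T TT2 t u + sg t (br x (deform sg T TT2 t u))"
        using hx[of t] unfolding O_hom_def by auto
      have e1: "deform sg T TT1 t (u + sv t (rho x u)) = T u + sg t (T (rho x u) + TT1 u) + sg (t*t) (TT1 (rho x u))"
        unfolding deform_def by (simp add: Tl TT1l G.scale_right_distrib algebra_simps)
      have e2: "deform sg T TT2 t u + sg t (br x (deform sg T TT2 t u)) = T u + sg t (TT2 u + br x (T u)) + sg (t*t) (br x (TT2 u))"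
        unfolding deform_def by (simp add: brr G.scale_right_distrib algebra_simps)
      have "0 + sg t (T (rho x u) + TT1 u - TT2 u - br x (T u)) + sg (t*t) (TT1 (rho x u) - br x (TT2 u))
           = deform sg T TT1 t (u + sv t (rho x u)) - (deform sg T TT2 t u + sg t (br x (deform sg T TT2 t u)))"
        unfolding e1 e2 by (simp add: G.scale_right_diff_distrib G.scale_right_distrib algebra_simps)
      then show "0 + sg t (T (rho x u) + TT1 u - TT2 u - br x (T u)) + sg (t*t) (TT1 (rho x u) - br x (TT2 u)) = 0"
        using O by simp
    qed
    then show ?thesis unfolding d0_def
      by (simp add: brr rl' Tl anti[of "T u" x] algebra_simps)
  qed
  then show ?thesis unfolding same_class_H1_def using cocyc assms(3,4) by blast
qed

end
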